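(* Let $(X,d)$ be a complete metric space and $\mathcal S$ a semigroup such that the action $(\mathcal S,X)$ is strong-orbit $k$-Lipschitzian with $k<\kappa(X)$. Then either all the orbits are unbounded or there exists $x\in X$ such that $sx=x$ for all $s\in\mathcal S$.
   Context: A semigroup action is a map $\mathcal S\times X\to X$, $(s,x)\mapsto sx$, with $(st)x=s(tx)$. The orbit of $x$ is $o(x)=\{x\}\cup\{sx:s\in\mathcal S\}$; for nonempty $C\subseteq X$, $D(x,C)=\sup\{d(x,y):y\in C\}$. The action is strong-orbit $k$-Lipschitzian ($k>0$) if $D(sx,o(sy))\le k\,D(x,o(y))$ for all $s\in\mathcal S$, $x,y\in X$. $B(x,r)$ denotes the closed ball. For $c\ge1$, balls in $X$ are $c$-regular if for every $k'<c$ there are $\mu,\alpha\in(0,1)$ such that for all $x,y\in X$ and $r>0$ with $d(x,y)\ge(1-\mu)r$ there exists $z\in X$ with $B(x,(1+\mu)r)\cap B(y,k'(1+\mu)r)\subseteq B(z,\alpha r)$. The Lifschitz characteristic is $\kappa(X)=\sup\{c\ge1:\text{balls in }X\text{ are }c\text{-regular}\}$. *)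

theory Defs
  imports "HOL-Analysis.Analysis" "HOL-Library.Extended_Real"
begin

definition is_action :: "('b::semigroup_mult \<Rightarrow> 'a \<Rightarrow> 'a) \<Rightarrow> bool" where
  "is_action act \<longleftrightarrow> (\<forall>s t x. act (s * t) x = act s (act t x))"

definition orbit :: "('b \<Rightarrow> 'a \<Rightarrow> 'a) \<Rightarrow> 'a \<Rightarrow> 'a set" where
  "orbit act x = insert x (range (\<lambda>s. act s x))"

definition Dsup :: "'a::metric_space \<Rightarrow> 'a set \<Rightarrow> ereal" where
  "Dsup x C = (SUP y\<in>C. ereal (dist x y))"

definition strong_orbit_lipschitzian :: "real \<Rightarrow> ('b \<Rightarrow> 'a::metric_space \<Rightarrow> 'a) \<Rightarrow> bool" where
  "strong_orbit_lipschitzian k act \<longleftrightarrow> k > 0 \<and>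
     (\<forall>s x y. Dsup (act s x) (orbit act (act s y)) \<le> ereal k * Dsup x (orbit act y))"

definition balls_regular :: "'a::metric_space itself \<Rightarrow> real \<Rightarrow> bool" where
  "balls_regular _ c \<longleftrightarrow> (\<forall>k'<c. \<exists>\<mu> \<alpha>. 0 < \<mu> \<and> \<mu> < 1 \<and> 0 < \<alpha> \<and> \<alpha> < 1 \<and>
     (\<forall>(x::'a) y r. r > 0 \<and> dist x y \<ge> (1 - \<mu>) * r \<longrightarrow>
        (\<exists>z. cball x ((1 + \<mu>) * r) \<inter> cball y (k' * (1 + \<mu>) * r) \<subseteq> cball z (\<alpha> * r))))"

definition lifschitz_char :: "'a::metric_space itself \<Rightarrow> ereal" where
  "lifschitz_char T = Sup (ereal ` {c. c \<ge> 1 \<and> balls_regular T c})"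

end

theory Submission
  imports Defs
begin

definition rad :: "('b \<Rightarrow> 'a::metric_space \<Rightarrow> 'a) \<Rightarrow> 'a \<Rightarrow> real" where
  "rad act y = Inf {r. 0 \<le> r \<and> (\<exists>z. orbit act y \<subseteq> cball z r)}"

lemma orbit_self: "y \<in> orbit act y" and orbit_act: "act s y \<in> orbit act y"
  by (auto simp: orbit_def)

lemma orbit_sub:
  assumes "is_action act" shows "orbit act (act s y) \<subseteq> orbit act y"
  using assms by (auto simp: orbit_def is_action_def) (metis rangeI)

lemma rad_ex:
  assumes "bounded (orbit act y)" shows "\<exists>r z. 0 \<le> r \<and> orbit act y \<subseteq> cball z r"
proof -
  obtain e where e: "\<forall>p\<in>orbit act y. dist y p \<le> e"
    using assms bounded_any_center by blast
  then have "0 \<le> e" using orbit_self[where act=act and y=y] by (metis order_trans zero_le_dist)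
  moreover have "orbit act y \<subseteq> cball y e" using e by auto
  ultimately show ?thesis by blast
qed

lemma rad_le:
  assumes "orbit act y \<subseteq> cball z r" "0 \<le> r" shows "rad act y \<le> r"
  unfolding rad_def
  by (rule cInf_lower) (use assms in \<open>auto intro!: bdd_belowI[where m=0]\<close>)

lemma rad_nonneg:
  assumes "bounded (orbit act y)" shows "0 \<le> rad act y"
  unfolding rad_def
  by (rule cInf_greatest) (use rad_ex[OF assms] in auto)

lemma rad_approx:
  assumes "bounded (orbit act y)" "rad act y < r"
  shows "\<exists>z. orbit act y \<subseteq> cball z r"
proof -
  have "{r. 0 \<le> r \<and> (\<exists>z. orbit act y \<subseteq> cball z r)} \<noteq> {}" using rad_ex[OF assms(1)] by auto
  from cInf_lessD[OF this assms(2)[unfolded rad_def]] obtain r' z where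
    "r' < r" "orbit act y \<subseteq> cball z r'" by auto
  moreover have "cball z r' \<subseteq> cball z r" using \<open>r' < r\<close> by (intro subset_cball) simp
  ultimately show ?thesis by blast
qed

lemma rad_diam:
  assumes "bounded (orbit act y)" "a \<in> orbit act y" "b \<in> orbit act y"
  shows "dist a b \<le> 2 * rad act y"
proof -
  have "dist a b / 2 \<le> rad act y"
    unfolding rad_def
  proof (rule cInf_greatest)
    show "{r. 0 \<le> r \<and> (\<exists>z. orbit act y \<subseteq> cball z r)} \<noteq> {}" using rad_ex[OF assms(1)] by auto
  next
    fix r assume "r \<in> {r. 0 \<le> r \<and> (\<exists>z. orbit act y \<subseteq> cball z r)}"
    then obtain z where "orbit act y \<subseteq> cball z r" by auto
    then have "dist z a \<le> r" "dist z b \<le> r" using assms by auto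
    then show "dist a b / 2 \<le> r" using dist_triangle3[of a b z] by linarith
  qed
  then show ?thesis by linarith
qed

lemma Dsup_le: "(\<And>p. p \<in> C \<Longrightarrow> dist x p \<le> c) \<Longrightarrow> Dsup x C \<le> ereal c"
  unfolding Dsup_def by (rule SUP_least) simp

lemma Dsup_ge: "p \<in> C \<Longrightarrow> ereal (dist x p) \<le> Dsup x C"
  unfolding Dsup_def by (rule SUP_upper)

lemma lip_dist:
  assumes L: "strong_orbit_lipschitzian k act"
    and c: "\<And>p. p \<in> orbit act y \<Longrightarrow> dist x p \<le> c"
    and q: "q \<in> orbit act (act s y)"
  shows "dist (act s x) q \<le> k * c"
proof -
  from L have k: "0 < k" and D: "Dsup (act s x) (orbit act (act s y)) \<le> ereal k * Dsup x (orbit act y)"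
    unfolding strong_orbit_lipschitzian_def by auto
  have "ereal (dist (act s x) q) \<le> Dsup (act s x) (orbit act (act s y))" using q by (rule Dsup_ge)
  also have "\<dots> \<le> ereal k * Dsup x (orbit act y)" by (rule D)
  also have "\<dots> \<le> ereal k * ereal c"
    by (rule ereal_mult_left_mono) (use k Dsup_le[OF c] in auto)
  finally show ?thesis by simp
qed



lemma geom_cauchy:
  fixes z :: "nat \<Rightarrow> 'a::metric_space"
  assumes c: "0 \<le> c" "c < 1" and d: "\<And>n. dist (z n) (z (Suc n)) \<le> C * c ^ n"
  shows "Cauchy z"
proof -
  have C0: "0 \<le> C"
  proof -
    have A: "dist (z 0) (z (Suc 0)) \<le> C" using d[of 0] by simp
    show ?thesis by (rule order_trans[OF zero_le_dist A])
  qed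
  have cf: "(1 - c) * dist (z m) (z (m + n)) \<le> C * c ^ m * (1 - c ^ n)" for m n
  proof (induct n)
    case 0 then show ?case by simp
  next
    case (Suc k)
    have "(1 - c) * dist (z m) (z (m + Suc k)) \<le>
        (1 - c) * (dist (z m) (z (m + k)) + dist (z (m + k)) (z (Suc (m + k))))"
      using c by (intro mult_left_mono) (simp_all add: dist_triangle)
    also have "\<dots> \<le> (1 - c) * (dist (z m) (z (m + k)) + C * c ^ (m + k))"
      using c d[of "m+k"] by (intro mult_left_mono) simp_all
    also have "\<dots> \<le> C * c ^ m * (1 - c ^ k) + (1 - c) * (C * c ^ (m + k))"
      using Suc by (simp add: algebra_simps)
    also have "\<dots> = C * c ^ m * (1 - c ^ Suc k)"
      by (simp add: power_add algebra_simps)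
    finally show ?case .
  qed
  have bnd: "dist (z m) (z (m + n)) \<le> C * c ^ m / (1 - c)" for m n
  proof -
    have "(1 - c) * dist (z m) (z (m + n)) \<le> C * c ^ m"
    proof -
      have "0 \<le> C * c ^ m * c ^ n" using C0 c by simp
      moreover have "C * c ^ m * (1 - c ^ n) = C * c ^ m - C * c ^ m * c ^ n" by (simp add: algebra_simps)
      ultimately show ?thesis using cf[of m n] by linarith
    qed
    then show ?thesis using c by (simp add: pos_le_divide_eq mult.commute)
  qed
  have lim: "(\<lambda>m. C * c ^ m / (1 - c)) \<longlonglongrightarrow> 0"
    using c by (intro tendsto_divide_zero tendsto_mult_right_zero LIMSEQ_power_zero) auto
  show ?thesis
  proof (rule metric_CauchyI)
    fix e :: real assume "0 < e"
    then obtain N where N: "\<forall>m\<ge>N. C * c ^ m / (1 - c) < e / 2"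
      using lim[unfolded LIMSEQ_def] by (metis dist_real_def diff_zero abs_less_iff half_gt_zero)
    have "dist (z m) (z n) < e" if "m \<ge> N" "n \<ge> N" for m n
    proof -
      have NN: "C * c ^ N / (1 - c) < e / 2" using N by simp
      have "dist (z N) (z m) \<le> C * c ^ N / (1 - c)" using bnd[of N "m - N"] that by simp
      then have "dist (z N) (z m) < e/2" using NN by linarith
      moreover have "dist (z N) (z n) \<le> C * c ^ N / (1 - c)" using bnd[of N "n - N"] that by simp
      then have "dist (z N) (z n) < e/2" using NN by linarith
      moreover have "dist (z m) (z n) \<le> dist (z N) (z m) + dist (z N) (z n)" by (rule dist_triangle3)
      ultimately show ?thesis by linarith
    qed
    then show "\<exists>M. \<forall>m\<ge>M. \<forall>n\<ge>M. dist (z m) (z n) < e" by blast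
  qed
qed

lemma step:
  fixes act :: "'b::semigroup_mult \<Rightarrow> 'a::metric_space \<Rightarrow> 'a"
  assumes A: "is_action act" and L: "strong_orbit_lipschitzian k act"
   and mu: "0 < \<mu>" "\<mu> < 1" and al: "0 < \<alpha>" "\<alpha> < 1"
   and reg: "\<forall>(x::'a) y r. r > 0 \<and> dist x y \<ge> (1 - \<mu>) * r \<longrightarrow>
        (\<exists>z. cball x ((1 + \<mu>) * r) \<inter> cball y (k * (1 + \<mu>) * r) \<subseteq> cball z (\<alpha> * r))"
   and B: "bounded (orbit act y)" and R: "0 < rad act y"
  shows "\<exists>y'. bounded (orbit act y') \<and> rad act y' \<le> max \<alpha> (1 - \<mu>) * rad act y \<and> dist y y' \<le> 4 * rad act y"
proof -
  define R where "R = rad act y"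
  have R0: "0 < R" using R by (simp add: R_def)
  have "rad act y < (1 + \<mu>) * R" using mu R0 by (simp add: R_def algebra_simps)
  then obtain z where z: "orbit act y \<subseteq> cball z ((1 + \<mu>) * R)" using rad_approx[OF B] by blast
  have dyz: "dist y z \<le> (1 + \<mu>) * R" using z orbit_self[where act=act and y=y] by (auto simp: dist_commute)
  have m0: "(1 + \<mu>) * R \<le> 2 * R" using mu R0 by (intro mult_right_mono) auto
  have m1: "(1 - \<mu>) * R \<le> max \<alpha> (1 - \<mu>) * R" using R0 by (intro mult_right_mono) auto
  have m2: "\<alpha> * R \<le> max \<alpha> (1 - \<mu>) * R" using R0 by (intro mult_right_mono) auto
  show ?thesis
  proof (cases "\<forall>s. dist z (act s z) < (1 - \<mu>) * R")
    case True
    have sub: "orbit act z \<subseteq> cball z ((1 - \<mu>) * R)"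
      using True mu R0 by (auto simp: orbit_def less_imp_le)
    have "rad act z \<le> (1 - \<mu>) * R" by (rule rad_le[OF sub]) (use mu R0 in simp)
    moreover have "bounded (orbit act z)" using bounded_subset[OF bounded_cball sub] .
    moreover have "dist y z \<le> 4 * R" using dyz m0 R0 by linarith
    ultimately show ?thesis using m1 unfolding R_def by (intro exI[of _ z]) auto
  next
    case False
    then obtain s where s: "(1 - \<mu>) * R \<le> dist z (act s z)" by (auto simp: not_less)
    from reg R0 s obtain w where
      w: "cball z ((1 + \<mu>) * R) \<inter> cball (act s z) (k * (1 + \<mu>) * R) \<subseteq> cball w (\<alpha> * R)" by blast
    have "orbit act (act s y) \<subseteq> cball z ((1 + \<mu>) * R)" using orbit_sub[OF A] z by blast
    moreover have "orbit act (act s y) \<subseteq> cball (act s z) (k * (1 + \<mu>) * R)"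
    proof
      fix q assume q: "q \<in> orbit act (act s y)"
      have "dist (act s z) q \<le> k * ((1 + \<mu>) * R)" by (rule lip_dist[OF L _ q]) (use z in auto)
      then show "q \<in> cball (act s z) (k * (1 + \<mu>) * R)" by (simp add: mult.assoc)
    qed
    ultimately have sub: "orbit act (act s y) \<subseteq> cball w (\<alpha> * R)" using w by blast
    have "rad act (act s y) \<le> \<alpha> * R" by (rule rad_le[OF sub]) (use al R0 in simp)
    moreover have "bounded (orbit act (act s y))" using bounded_subset[OF bounded_cball sub] .
    moreover have "dist z (act s y) \<le> (1 + \<mu>) * R" using z orbit_act[where act=act and s=s and y=y] by auto
    then have "dist y (act s y) \<le> 4 * R" using dyz m0 dist_triangle[of y "act s y" z]
      by linarith
    ultimately show ?thesis using m2 unfolding R_def by (intro exI[of _ "act s y"]) auto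
  qed
qed

theorem corollary4p2:
  fixes act :: "'b::semigroup_mult \<Rightarrow> 'a::{metric_space, complete_space} \<Rightarrow> 'a"
    and k :: real
  assumes "is_action act"
    and "strong_orbit_lipschitzian k act"
    and "ereal k < lifschitz_char TYPE('a)"
  shows "(\<forall>x. \<not> bounded (orbit act x)) \<or> (\<exists>x. \<forall>s. act s x = x)"
proof (rule ccontr)
  assume "\<not> ?thesis"
  then obtain y0 where B0: "bounded (orbit act y0)" and nf: "\<And>x. \<exists>s. act s x \<noteq> x" by auto
  from assms(3) obtain c where c: "balls_regular TYPE('a) c" "k < c"
    unfolding lifschitz_char_def by (auto simp: less_Sup_iff)
  from c obtain \<mu> \<alpha> where mu: "0 < \<mu>" "\<mu> < 1" and al: "0 < \<alpha>" "\<alpha> < 1"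
    and reg: "\<forall>(x::'a) y r. r > 0 \<and> dist x y \<ge> (1 - \<mu>) * r \<longrightarrow>
        (\<exists>z. cball x ((1 + \<mu>) * r) \<inter> cball y (k * (1 + \<mu>) * r) \<subseteq> cball z (\<alpha> * r))"
    unfolding balls_regular_def by blast
  have k0: "0 < k" using assms(2) by (simp add: strong_orbit_lipschitzian_def)
  have pos: "0 < rad act y" if "bounded (orbit act y)" for y
  proof -
    obtain s where "act s y \<noteq> y" using nf by blast
    then have "0 < dist y (act s y)" by simp
    also have "\<dots> \<le> 2 * rad act y" by (rule rad_diam[OF that orbit_self orbit_act])
    finally show ?thesis by simp
  qed
  define \<beta> where "\<beta> = max \<alpha> (1 - \<mu>)"
  have \<beta>: "0 \<le> \<beta>" "\<beta> < 1" using mu al by (auto simp: \<beta>_def)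
  define f where "f y = (SOME y'. bounded (orbit act y') \<and> rad act y' \<le> \<beta> * rad act y \<and> dist y y' \<le> 4 * rad act y)" for y
  have fP: "bounded (orbit act (f y)) \<and> rad act (f y) \<le> \<beta> * rad act y \<and> dist y (f y) \<le> 4 * rad act y"
    if "bounded (orbit act y)" for y
    unfolding f_def \<beta>_def by (rule someI_ex, rule step[OF assms(1,2) mu al reg that pos[OF that]])
  define Y where "Y n = (f ^^ n) y0" for n
  define R0 where "R0 = rad act y0"
  have YS: "Y (Suc n) = f (Y n)" for n by (simp add: Y_def)
  have inv: "bounded (orbit act (Y n)) \<and> rad act (Y n) \<le> \<beta> ^ n * R0" for n
  proof (induct n)
    case 0 then show ?case using B0 by (simp add: Y_def R0_def)
  next
    case (Suc n)
    then have "bounded (orbit act (Y (Suc n)))" "rad act (Y (Suc n)) \<le> \<beta> * rad act (Y n)"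
      using fP[of "Y n"] YS by auto
    moreover have "\<beta> * rad act (Y n) \<le> \<beta> * (\<beta> ^ n * R0)" using Suc \<beta> by (intro mult_left_mono) auto
    ultimately show ?case by simp
  qed
  have dY: "dist (Y n) (Y (Suc n)) \<le> (4 * R0) * \<beta> ^ n" for n
  proof -
    have "dist (Y n) (Y (Suc n)) \<le> 4 * rad act (Y n)" using fP[of "Y n"] inv[of n] YS by auto
    also have "\<dots> \<le> 4 * (\<beta> ^ n * R0)" using inv[of n] by simp
    finally show ?thesis by (simp add: algebra_simps)
  qed
  have "Cauchy Y" by (rule geom_cauchy[OF \<beta> dY])
  then obtain w where Yw: "Y \<longlonglongrightarrow> w" using Cauchy_convergent convergent_def by blast
  obtain s where sw: "act s w \<noteq> w" using nf by blast
  define g where "g n = (1 + k) * dist w (Y n) + (2 + 2 * k) * (\<beta> ^ n * R0)" for n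
  have bnd: "dist (act s w) w \<le> g n" for n
  proof -
    define y where "y = Y n"
    define \<rho> where "\<rho> = rad act y"
    have By: "bounded (orbit act y)" and \<rho>: "\<rho> \<le> \<beta> ^ n * R0" using inv[of n] by (auto simp: y_def \<rho>_def)
    have d1: "dist (act s w) (act s y) \<le> k * (dist w y + 2 * \<rho>)"
    proof (rule lip_dist[OF assms(2) _ orbit_self])
      fix p assume "p \<in> orbit act y"
      then have "dist y p \<le> 2 * \<rho>" using rad_diam[OF By orbit_self] by (simp add: \<rho>_def)
      then show "dist w p \<le> dist w y + 2 * \<rho>" using dist_triangle[of w p y] by linarith
    qed
    have d2: "dist (act s y) y \<le> 2 * \<rho>" using rad_diam[OF By orbit_act orbit_self] by (simp add: \<rho>_def)
    have "dist (act s w) w \<le> dist (act s w) (act s y) + dist (act s y) y + dist y w"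
      using dist_triangle[of "act s w" w "act s y"] dist_triangle[of "act s y" w y] by linarith
    also have "\<dots> \<le> (1 + k) * dist w y + (2 + 2 * k) * \<rho>"
      using d1 d2 by (simp add: dist_commute algebra_simps)
    also have "\<dots> \<le> g n" unfolding g_def y_def[symmetric] using \<rho> k0
      by (intro add_left_mono mult_left_mono) auto
    finally show ?thesis .
  qed
  have "g \<longlonglongrightarrow> (1 + k) * dist w w + (2 + 2 * k) * (0 * R0)"
    unfolding g_def
    by (intro tendsto_intros Yw LIMSEQ_power_zero) (use \<beta> in auto)
  then have "g \<longlonglongrightarrow> 0" by simp
  then have "dist (act s w) w \<le> 0" using bnd by (intro LIMSEQ_le_const) auto
  then show False using sw by simp
qed

end
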